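(* Let $\ell\ge1$, $N=2^\ell$, $n_c,n_v\ge1$, ${\mathbf x}_{h,u}\in\mathbb{F}_2^\ell$ for $h\in\{0,\dots,n_c-1\}$, $u\in\{0,\dots,n_v-1\}$, and let $H$ be the block matrix whose $(h,u)$ block is $P_{{\mathbf x}_{h,u}}$. For $0\le h<i<j\le n_c-1$ and $m\in\{0,\dots,n_v-1\}$, let $\rho^{h,i,j}_m$ be the number of ordered pairs $(u,u')$ with $u,u'\in\{0,\dots,n_v-1\}\setminus\{m\}$, $u\ne u'$, and $${\mathbf x}_{h,u}+{\mathbf x}_{i,u}+{\mathbf x}_{i,m}={\mathbf x}_{h,u'}+{\mathbf x}_{j,u'}+{\mathbf x}_{j,m}.$$ Then the number of $6$-cycles in the Tanner graph of $H$ is $$\mathcal{N}_6=2^\ell\sum_{0\le h<i<j\le n_c-1}\ \sum_{m=0}^{n_v-1}\rho^{h,i,j}_m.$$ In particular, the Tanner graph of $H$ has no $6$-cycles if and only if all $\rho^{h,i,j}_m=0$.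
   Context: Rows and columns of $N\times N$ binary matrices are indexed by $\mathbb{F}_2^\ell$ via ${\mathbf x}=(x_1,\dots,x_\ell)\leftrightarrow 1+\sum_i x_i2^{i-1}$. For ${\mathbf a}\in\mathbb{F}_2^\ell$, $P_{\mathbf a}$ is the $N\times N$ binary matrix with $(P_{\mathbf a})_{{\mathbf x},{\mathbf y}}=1$ iff ${\mathbf y}={\mathbf x}+{\mathbf a}$. The Tanner graph of a binary matrix is the bipartite graph with check nodes = rows, variable nodes = columns, edges at the $1$-entries. A $k$-cycle is a closed walk of $k$ edges with distinct vertices and distinct edges. *)

theory Defs
  imports Main
begin

text \<open>Elements of F_2^l are bool lists of length l (entry i = coordinate x_{i+1}).\<close>
definition F2vec :: "nat \<Rightarrow> bool list set" where
  "F2vec l = {v. length v = l}"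

definition vadd :: "bool list \<Rightarrow> bool list \<Rightarrow> bool list" where
  "vadd x y = map2 (\<noteq>) x y"

text \<open>Index of a vector (0-based): x corresponds to row/column sum_i x_i 2^(i-1)
  (the paper's 1-based index minus one).\<close>
definition vidx :: "bool list \<Rightarrow> nat" where
  "vidx v = (\<Sum>i<length v. if v ! i then 2 ^ i else 0)"

text \<open>Binary matrices: number of rows, number of columns, entries (True = 1),
  indices 0-based.\<close>
record bmat =
  nrows :: nat
  ncols :: nat
  entry :: "nat \<Rightarrow> nat \<Rightarrow> bool"

definition Pmat :: "nat \<Rightarrow> bool list \<Rightarrow> bmat" where
  "Pmat l a = \<lparr> nrows = 2 ^ l, ncols = 2 ^ l,
     entry = (\<lambda>r c. \<exists>x\<in>F2vec l. \<exists>y\<in>F2vec l. vidx x = r \<and> vidx y = c \<and> y = vadd x a) \<rparr>"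

definition block_mat :: "nat \<Rightarrow> nat \<Rightarrow> nat \<Rightarrow> (nat \<Rightarrow> nat \<Rightarrow> bmat) \<Rightarrow> bmat" where
  "block_mat N nc nv B = \<lparr> nrows = nc * N, ncols = nv * N,
     entry = (\<lambda>r c. r < nc * N \<and> c < nv * N \<and>
                    entry (B (r div N) (c div N)) (r mod N) (c mod N)) \<rparr>"

definition QC_H :: "nat \<Rightarrow> nat \<Rightarrow> nat \<Rightarrow> (nat \<Rightarrow> nat \<Rightarrow> bool list) \<Rightarrow> bmat" where
  "QC_H l nc nv X = block_mat (2 ^ l) nc nv (\<lambda>h u. Pmat l (X h u))"

text \<open>Tanner graph: check nodes Inl r (rows), variable nodes Inr c (columns).\<close>
definition tanner_vertices :: "bmat \<Rightarrow> (nat + nat) set" where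
  "tanner_vertices M = Inl ` {..<nrows M} \<union> Inr ` {..<ncols M}"

definition tanner_adj :: "bmat \<Rightarrow> (nat + nat) \<Rightarrow> (nat + nat) \<Rightarrow> bool" where
  "tanner_adj M a b =
     ((\<exists>r c. a = Inl r \<and> b = Inr c \<and> r < nrows M \<and> c < ncols M \<and> entry M r c) \<or>
      (\<exists>r c. a = Inr c \<and> b = Inl r \<and> r < nrows M \<and> c < ncols M \<and> entry M r c))"

definition walk_edge :: "nat \<Rightarrow> 'v list \<Rightarrow> nat \<Rightarrow> 'v set" where
  "walk_edge k vs i = {vs ! i, vs ! ((i + 1) mod k)}"

definition is_k_cycle :: "('v \<Rightarrow> 'v \<Rightarrow> bool) \<Rightarrow> nat \<Rightarrow> 'v list \<Rightarrow> bool" where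
  "is_k_cycle adj k vs =
     (k \<ge> 1 \<and> length vs = k \<and> distinct vs \<and>
      (\<forall>i<k. adj (vs ! i) (vs ! ((i + 1) mod k))) \<and>
      distinct (map (walk_edge k vs) [0..<k]))"

text \<open>Number of k-cycles: cycles counted as subgraphs, i.e. distinct edge sets of
  closed walks as above (independent of starting point and direction).\<close>
definition num_k_cycles :: "('v \<Rightarrow> 'v \<Rightarrow> bool) \<Rightarrow> nat \<Rightarrow> nat" where
  "num_k_cycles adj k =
     card {E. \<exists>vs. is_k_cycle adj k vs \<and> E = set (map (walk_edge k vs) [0..<k])}"

definition rho :: "nat \<Rightarrow> (nat \<Rightarrow> nat \<Rightarrow> bool list) \<Rightarrow> nat \<Rightarrow> nat \<Rightarrow> nat \<Rightarrow> nat \<Rightarrow> nat" where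
  "rho nv X h i j m = card {(u, u'). u < nv \<and> u' < nv \<and> u \<noteq> m \<and> u' \<noteq> m \<and> u \<noteq> u' \<and>
      vadd (vadd (X h u) (X i u)) (X i m) = vadd (vadd (X h u') (X j u')) (X j m)}"

end

theory Submission
  imports Defs
begin


lemma vidx_Cons: "vidx (b # v) = (if b then 1 else 0) + 2 * vidx v"
  unfolding vidx_def
  apply (simp only: length_Cons sum.lessThan_Suc_shift)
  apply (simp add: sum_distrib_left)
  apply (rule sum.cong; simp)
  done

lemma vidx_Nil[simp]: "vidx [] = 0" by (simp add: vidx_def)

lemma vidx_less: "vidx v < 2 ^ length v"
  by (induction v) (auto simp: vidx_Cons)

lemma parity_nat: "Suc (2 * (x::nat)) \<noteq> 2 * y" by presburger

lemma parity_eq: "(if b then 1 else 0) + 2 * (x::nat) = (if c then 1 else 0) + 2 * y \<Longrightarrow> b = c \<and> x = y"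
  by (cases b; cases c) (simp_all add: parity_nat parity_nat[symmetric])

lemma vidx_inj: "length v = length w \<Longrightarrow> vidx v = vidx w \<Longrightarrow> v = w"
proof (induction v arbitrary: w)
  case Nil then show ?case by simp
next
  case (Cons b v)
  then obtain c w' where w: "w = c # w'" by (cases w) auto
  from Cons.prems have eq: "(if b then 1 else 0) + 2 * vidx v = (if c then 1 else 0) + 2 * (vidx w'::nat)"
    by (simp add: w vidx_Cons)
  from parity_eq[OF eq] have bc: "b = c" and vv: "vidx v = vidx w'" by auto
  have "v = w'" using Cons.IH[of w'] Cons.prems w vv by simp
  then show ?case using w bc by simp
qed

lemma F2vec_len[simp]: "x \<in> F2vec l \<longleftrightarrow> length x = l" by (simp add: F2vec_def)

lemma F2vec_finite: "finite (F2vec l)" and F2vec_card: "card (F2vec l) = 2 ^ l"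
proof -
  have e: "F2vec l = {xs. set xs \<subseteq> (UNIV::bool set) \<and> length xs = l}" by (auto simp: F2vec_def)
  show "finite (F2vec l)" unfolding e by (rule finite_lists_length_eq) simp
  show "card (F2vec l) = 2 ^ l" unfolding e by (subst card_lists_length_eq) simp_all
qed

lemma vidx_surj: "vidx ` F2vec l = {..<(2::nat) ^ l}"
proof (rule card_subset_eq)
  show "vidx ` F2vec l \<subseteq> {..<2 ^ l}" using vidx_less by auto
  have "inj_on vidx (F2vec l)" by (auto intro!: inj_onI vidx_inj)
  then show "card (vidx ` F2vec l) = card {..<(2::nat) ^ l}" by (simp add: card_image F2vec_card)
qed simp

lemma length_vadd[simp]: "length (vadd x y) = min (length x) (length y)"
  by (simp add: vadd_def)
lemma nth_vadd[simp]: "k < length x \<Longrightarrow> k < length y \<Longrightarrow> vadd x y ! k = (x ! k \<noteq> y ! k)"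
  by (simp add: vadd_def)

lemma vadd_assoc: "vadd (vadd x y) z = vadd x (vadd y z)"
  by (auto simp: list_eq_iff_nth_eq)

lemma vadd_inv: "length a = length x \<Longrightarrow> vadd (vadd x a) a = x"
  by (auto simp: list_eq_iff_nth_eq)

lemma vadd_swap: "length a = l \<Longrightarrow> length x = l \<Longrightarrow> length y = l \<Longrightarrow> y = vadd x a \<longleftrightarrow> x = vadd y a"
  using vadd_inv by metis

lemma vadd_cancel: "length a = l \<Longrightarrow> length x = l \<Longrightarrow> length b = l \<Longrightarrow> vadd x a = vadd x b \<Longrightarrow> a = b"
  by (auto simp: list_eq_iff_nth_eq)

lemma all6: "(\<forall>i<(6::nat). P i) = (P 0 \<and> P 1 \<and> P 2 \<and> P 3 \<and> P 4 \<and> P 5)"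
proof -
  have e: "(6::nat) = Suc (Suc (Suc (Suc (Suc (Suc 0)))))" by simp
  show ?thesis unfolding e All_less_Suc by (simp add: conj_ac numeral_eq_Suc)
qed

lemma upt6: "[0..<6] = [0,1,2,3,4,5::nat]" by (simp add: numeral_eq_Suc)





definition vecof :: "nat \<Rightarrow> nat \<Rightarrow> bool list" where
  "vecof l a = inv_into (F2vec l) vidx a"

lemma inj_vidx: "inj_on vidx (F2vec l)" by (auto intro!: inj_onI vidx_inj)

lemma vecof_vidx[simp]: "length x = l \<Longrightarrow> vecof l (vidx x) = x"
  unfolding vecof_def by (rule inv_into_f_f[OF inj_vidx]) simp

lemma vecof_props: assumes "a < 2 ^ l" shows "vidx (vecof l a) = a" "length (vecof l a) = l"
proof -
  have a: "a \<in> vidx ` F2vec l" using assms vidx_surj by auto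
  show "vidx (vecof l a) = a" unfolding vecof_def by (rule f_inv_into_f[OF a])
  show "length (vecof l a) = l" using inv_into_into[OF a] unfolding vecof_def by simp
qed

lemma ex_vec: "a < 2 ^ l \<Longrightarrow> (\<exists>x\<in>F2vec l. vidx x = a \<and> P x) \<longleftrightarrow> P (vecof l a)"
  using vecof_props[of a l] vecof_vidx by (auto simp: F2vec_def)

lemma vec_eq2: "a < 2 ^ l \<Longrightarrow> (v \<in> F2vec l \<and> vidx v = a) \<longleftrightarrow> vecof l a = v"
  using vecof_props[of a l] vecof_vidx by (auto simp: F2vec_def)

definition ent :: "nat \<Rightarrow> nat \<Rightarrow> nat \<Rightarrow> (nat \<Rightarrow> nat \<Rightarrow> bool list) \<Rightarrow> nat \<Rightarrow> nat \<Rightarrow> bool" where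
  "ent l nc nv X r c \<longleftrightarrow> r < nc * 2 ^ l \<and> c < nv * 2 ^ l \<and>
     vecof l (c mod 2 ^ l) = vadd (vecof l (r mod 2 ^ l)) (X (r div 2 ^ l) (c div 2 ^ l))"

lemma QC_simps[simp]: "nrows (QC_H l nc nv X) = nc * 2 ^ l" "ncols (QC_H l nc nv X) = nv * 2 ^ l"
  by (simp_all add: QC_H_def block_mat_def)

lemma QC_entry: "entry (QC_H l nc nv X) r c \<longleftrightarrow> ent l nc nv X r c"
proof -
  have m: "(n::nat) mod 2 ^ l < 2 ^ l" for n by simp
  show ?thesis
    unfolding QC_H_def block_mat_def Pmat_def ent_def
    by (simp add: ex_vec[OF m] vec_eq2[OF m] del: F2vec_len)
qed

lemma adj_Inl: "tanner_adj (QC_H l nc nv X) (Inl r) b \<longleftrightarrow> (\<exists>c. b = Inr c \<and> ent l nc nv X r c)"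
  unfolding tanner_adj_def by (auto simp: QC_entry ent_def)

lemma adj_Inr: "tanner_adj (QC_H l nc nv X) (Inr c) b \<longleftrightarrow> (\<exists>r. b = Inl r \<and> ent l nc nv X r c)"
  unfolding tanner_adj_def by (auto simp: QC_entry ent_def)

definition RV :: "nat \<Rightarrow> nat \<Rightarrow> bool list \<Rightarrow> nat + nat" where
  "RV l h x = Inl (h * 2 ^ l + vidx x)"
definition CV :: "nat \<Rightarrow> nat \<Rightarrow> bool list \<Rightarrow> nat + nat" where
  "CV l h x = Inr (h * 2 ^ l + vidx x)"

lemma RV_CV[simp]: "RV l h x \<noteq> CV l u y" "CV l u y \<noteq> RV l h x"
  by (simp_all add: RV_def CV_def)

lemma divmod_blk: "a < 2 ^ l \<Longrightarrow> (h * 2 ^ l + a) div 2 ^ l = h \<and> (h * 2 ^ l + (a::nat)) mod 2 ^ l = a"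
  by simp

lemma idx_inj: "length x = l \<Longrightarrow> length x' = l \<Longrightarrow>
   h * 2 ^ l + vidx x = h' * 2 ^ l + vidx x' \<longleftrightarrow> h = h' \<and> x = x'"
  by (metis divmod_blk vidx_less vidx_inj)

lemma RV_inj: "length x = l \<Longrightarrow> length x' = l \<Longrightarrow> RV l h x = RV l h' x' \<longleftrightarrow> h = h' \<and> x = x'"
  by (simp add: RV_def idx_inj)
lemma CV_inj: "length x = l \<Longrightarrow> length x' = l \<Longrightarrow> CV l h x = CV l h' x' \<longleftrightarrow> h = h' \<and> x = x'"
  by (simp add: CV_def idx_inj)

lemma idx_bound: "h < nc \<Longrightarrow> length x = l \<Longrightarrow> h * 2 ^ l + vidx x < nc * 2 ^ l"
proof -
  assume "h < nc" "length x = l"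
  then have "vidx x < 2 ^ l" using vidx_less by metis
  moreover have "(h + 1) * 2 ^ l \<le> nc * (2::nat) ^ l" using \<open>h < nc\<close> by (intro mult_right_mono) auto
  ultimately show ?thesis by (simp add: algebra_simps)
qed

lemma ent_RC: "h < nc \<Longrightarrow> u < nv \<Longrightarrow> length x = l \<Longrightarrow> length y = l \<Longrightarrow>
   ent l nc nv X (h * 2 ^ l + vidx x) (u * 2 ^ l + vidx y) \<longleftrightarrow> y = vadd x (X h u)"
  unfolding ent_def using idx_bound[of h nc x l] idx_bound[of u nv y l] vidx_less[of x] vidx_less[of y]
  by (simp add: divmod_blk)

lemma adj_RC: "h < nc \<Longrightarrow> u < nv \<Longrightarrow> length x = l \<Longrightarrow> length y = l \<Longrightarrow>
   tanner_adj (QC_H l nc nv X) (RV l h x) (CV l u y) \<longleftrightarrow> y = vadd x (X h u)"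
  by (simp add: RV_def CV_def adj_Inl ent_RC)
lemma adj_CR: "h < nc \<Longrightarrow> u < nv \<Longrightarrow> length x = l \<Longrightarrow> length y = l \<Longrightarrow>
   tanner_adj (QC_H l nc nv X) (CV l u y) (RV l h x) \<longleftrightarrow> y = vadd x (X h u)"
  by (simp add: RV_def CV_def adj_Inr ent_RC)

lemma decomp: assumes "r < nc * 2 ^ l"
  shows "r div 2 ^ l < nc" "length (vecof l (r mod 2 ^ l)) = l"
    "r = (r div 2 ^ l) * 2 ^ l + vidx (vecof l (r mod 2 ^ l))"
proof -
  show "r div 2 ^ l < nc" using assms by (simp add: less_mult_imp_div_less)
  show "length (vecof l (r mod 2 ^ l)) = l" by (simp add: vecof_props)
  show "r = (r div 2 ^ l) * 2 ^ l + vidx (vecof l (r mod 2 ^ l))" by (simp add: vecof_props div_mult_mod_eq)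
qed

definition Eexp :: "'v \<Rightarrow> 'v \<Rightarrow> 'v \<Rightarrow> 'v \<Rightarrow> 'v \<Rightarrow> 'v \<Rightarrow> 'v set set" where
  "Eexp a b c d e g = {{a,b},{b,c},{c,d},{d,e},{e,g},{g,a}}"

lemma Eexp_rot: "Eexp a b c d e g = Eexp b c d e g a"
  by (simp add: Eexp_def insert_commute)
lemma Eexp_refl: "Eexp a b c d e g = Eexp a g e d c b"
  by (auto simp: Eexp_def insert_commute)
lemma Union_Eexp: "\<Union>(Eexp a b c d e g) = {a,b,c,d,e,g}"
  by (auto simp: Eexp_def)

lemma cyc6: "is_k_cycle adj 6 [a,b,c,d,e,g] \<longleftrightarrow>
   distinct [a,b,c,d,e,g] \<and> adj a b \<and> adj b c \<and> adj c d \<and> adj d e \<and> adj e g \<and> adj g a \<and>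
   distinct [{a,b},{b,c},{c,d},{d,e},{e,g},{g,a}]"
  unfolding is_k_cycle_def all6 upt6 walk_edge_def by simp

lemma edges6: "set (map (walk_edge 6 [a,b,c,d,e,g]) [0..<6]) = Eexp a b c d e g"
  unfolding upt6 walk_edge_def Eexp_def by simp

lemma dist_edges: "distinct [a,b,c,d,e,g] \<Longrightarrow> distinct [{a,b},{b,c},{c,d},{d,e},{e,g},{g,a}]"
  by (auto simp: doubleton_eq_iff)

lemma len6: "length vs = 6 \<Longrightarrow> \<exists>a b c d e g. vs = [a,b,c,d,e,g]"
  by (clarsimp simp: length_Suc_conv numeral_eq_Suc)




definition rhoset :: "nat \<Rightarrow> (nat \<Rightarrow> nat \<Rightarrow> bool list) \<Rightarrow> nat \<Rightarrow> nat \<Rightarrow> nat \<Rightarrow> nat \<Rightarrow> (nat \<times> nat) set" where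
  "rhoset nv X h i j m = {(u, u'). u < nv \<and> u' < nv \<and> u \<noteq> m \<and> u' \<noteq> m \<and> u \<noteq> u' \<and>
      vadd (vadd (X h u) (X i u)) (X i m) = vadd (vadd (X h u') (X j u')) (X j m)}"

lemma rho_eq: "rho nv X h i j m = card (rhoset nv X h i j m)"
  by (simp add: rho_def rhoset_def)

definition Sset :: "nat \<Rightarrow> nat \<Rightarrow> nat \<Rightarrow> (nat \<Rightarrow> nat \<Rightarrow> bool list) \<Rightarrow>
    ((nat \<times> nat \<times> nat) \<times> nat \<times> (nat \<times> nat) \<times> bool list) set" where
  "Sset l nc nv X = Sigma {(h, i, j). h < i \<and> i < j \<and> j < nc}
     (\<lambda>(h, i, j). Sigma {..<nv} (\<lambda>m. rhoset nv X h i j m \<times> F2vec l))"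

definition fmap :: "nat \<Rightarrow> (nat \<Rightarrow> nat \<Rightarrow> bool list) \<Rightarrow>
    ((nat \<times> nat \<times> nat) \<times> nat \<times> (nat \<times> nat) \<times> bool list) \<Rightarrow> (nat + nat) set set" where
  "fmap l X = (\<lambda>((h, i, j), (m, ((u, u'), x))).
     let y1 = vadd x (X h u); x2 = vadd y1 (X i u); y3 = vadd x (X h u'); x3 = vadd y3 (X j u');
         y2 = vadd x3 (X j m)
     in Eexp (RV l h x) (CV l u y1) (RV l i x2) (CV l m y2) (RV l j x3) (CV l u' y3))"

lemma Sset_mem: "((h, i, j), (m, ((u, u'), x))) \<in> Sset l nc nv X \<longleftrightarrow>
   h < i \<and> i < j \<and> j < nc \<and> m < nv \<and> u < nv \<and> u' < nv \<and> u \<noteq> m \<and> u' \<noteq> m \<and> u \<noteq> u' \<and>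
   vadd (vadd (X h u) (X i u)) (X i m) = vadd (vadd (X h u') (X j u')) (X j m) \<and> length x = l"
  by (auto simp: Sset_def rhoset_def)

context
  fixes l nc nv :: nat and X :: "nat \<Rightarrow> nat \<Rightarrow> bool list"
  assumes Xlen: "\<And>h u. h < nc \<Longrightarrow> u < nv \<Longrightarrow> length (X h u) = l"
begin

lemma L_sorted:
  assumes o: "h1 < h2" "h2 < h3" "h3 < nc" "u1 < nv" "u2 < nv" "u3 < nv" "u1 \<noteq> u2" "u1 \<noteq> u3" "u2 \<noteq> u3"
  and len: "length x1 = l" "length x2 = l" "length x3 = l" "length y1 = l" "length y2 = l" "length y3 = l"
  and e1: "y1 = vadd x1 (X h1 u1)" and e2: "y1 = vadd x2 (X h2 u1)"
  and e3: "y2 = vadd x2 (X h2 u2)" and e4: "y2 = vadd x3 (X h3 u2)"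
  and e5: "y3 = vadd x3 (X h3 u3)" and e6: "y3 = vadd x1 (X h1 u3)"
  shows "Eexp (RV l h1 x1) (CV l u1 y1) (RV l h2 x2) (CV l u2 y2) (RV l h3 x3) (CV l u3 y3)
           \<in> fmap l X ` Sset l nc nv X"
proof -
  have lx: "length (X h1 u1) = l" "length (X h2 u1) = l" "length (X h2 u2) = l"
    "length (X h3 u2) = l" "length (X h3 u3) = l" "length (X h1 u3) = l"
    using Xlen o by auto
  have x2: "vadd y1 (X h2 u1) = x2" using e2 vadd_inv lx len by metis
  have x3: "vadd y3 (X h3 u3) = x3" using e5 vadd_inv lx len by metis
  have c1: "vadd x1 (vadd (X h1 u1) (vadd (X h2 u1) (X h2 u2))) = y2"
    unfolding e3 x2[symmetric] e1 by (simp add: vadd_assoc)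
  have c2: "vadd x1 (vadd (X h1 u3) (vadd (X h3 u3) (X h3 u2))) = y2"
    unfolding e4 x3[symmetric] e6 by (simp add: vadd_assoc)
  have "vadd (X h1 u1) (vadd (X h2 u1) (X h2 u2)) = vadd (X h1 u3) (vadd (X h3 u3) (X h3 u2))"
    by (rule vadd_cancel[of _ l x1]) (use c1 c2 lx len in auto)
  then have cond: "vadd (vadd (X h1 u1) (X h2 u1)) (X h2 u2) = vadd (vadd (X h1 u3) (X h3 u3)) (X h3 u2)"
    by (simp add: vadd_assoc)
  define s where "s = ((h1, h2, h3), (u2, ((u1, u3), x1)))"
  have sS: "s \<in> Sset l nc nv X" unfolding s_def Sset_mem using o cond len by auto
  have f1: "vadd x1 (X h1 u1) = y1" using e1 by simp
  have f3: "vadd x1 (X h1 u3) = y3" using e6 by simp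
  have f5: "vadd x3 (X h3 u2) = y2" using e4 by simp
  have "fmap l X s = Eexp (RV l h1 x1) (CV l u1 y1) (RV l h2 x2) (CV l u2 y2) (RV l h3 x3) (CV l u3 y3)"
    unfolding s_def fmap_def Let_def by (simp add: f1 f3 f5 x2 x3)
  then show ?thesis using sS by (metis image_eqI)
qed


lemma rep: assumes "r < n * 2 ^ l" obtains h x where "h < n" "length x = l" "r = h * 2 ^ l + vidx x"
  using decomp[OF assms] by blast

lemma L_all:
  assumes a: "ent l nc nv X r1 c1" "ent l nc nv X r2 c1" "ent l nc nv X r2 c2" "ent l nc nv X r3 c2"
     "ent l nc nv X r3 c3" "ent l nc nv X r1 c3"
  and d: "r1 \<noteq> r2" "r1 \<noteq> r3" "r2 \<noteq> r3" "c1 \<noteq> c2" "c1 \<noteq> c3" "c2 \<noteq> c3"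
  shows "Eexp (Inl r1) (Inr c1) (Inl r2) (Inr c2) (Inl r3) (Inr c3) \<in> fmap l X ` Sset l nc nv X"
proof -
  obtain h1 x1 where r1: "h1 < nc" "length x1 = l" "r1 = h1 * 2 ^ l + vidx x1"
    using rep[of r1] a(1) unfolding ent_def by blast
  obtain h2 x2 where r2: "h2 < nc" "length x2 = l" "r2 = h2 * 2 ^ l + vidx x2"
    using rep[of r2] a(2) unfolding ent_def by blast
  obtain h3 x3 where r3: "h3 < nc" "length x3 = l" "r3 = h3 * 2 ^ l + vidx x3"
    using rep[of r3] a(5) unfolding ent_def by blast
  obtain u1 y1 where c1: "u1 < nv" "length y1 = l" "c1 = u1 * 2 ^ l + vidx y1"
    using rep[of c1] a(1) unfolding ent_def by blast
  obtain u2 y2 where c2: "u2 < nv" "length y2 = l" "c2 = u2 * 2 ^ l + vidx y2"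
    using rep[of c2] a(3) unfolding ent_def by blast
  obtain u3 y3 where c3: "u3 < nv" "length y3 = l" "c3 = u3 * 2 ^ l + vidx y3"
    using rep[of c3] a(5) unfolding ent_def by blast
  have e1: "y1 = vadd x1 (X h1 u1)" using a(1) unfolding r1(3) c1(3) by (simp add: ent_RC r1 c1)
  have e2: "y1 = vadd x2 (X h2 u1)" using a(2) unfolding r2(3) c1(3) by (simp add: ent_RC r2 c1)
  have e3: "y2 = vadd x2 (X h2 u2)" using a(3) unfolding r2(3) c2(3) by (simp add: ent_RC r2 c2)
  have e4: "y2 = vadd x3 (X h3 u2)" using a(4) unfolding r3(3) c2(3) by (simp add: ent_RC r3 c2)
  have e5: "y3 = vadd x3 (X h3 u3)" using a(5) unfolding r3(3) c3(3) by (simp add: ent_RC r3 c3)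
  have e6: "y3 = vadd x1 (X h1 u3)" using a(6) unfolding r1(3) c3(3) by (simp add: ent_RC r1 c3)
  have lx: "length (X h1 u1) = l" "length (X h2 u1) = l" "length (X h2 u2) = l"
    "length (X h3 u2) = l" "length (X h3 u3) = l" "length (X h1 u3) = l"
    using Xlen r1 r2 r3 c1 c2 c3 by auto
  have "h1 \<noteq> h2"
  proof
    assume "h1 = h2"
    then have "vadd (vadd x1 (X h1 u1)) (X h1 u1) = vadd (vadd x2 (X h1 u1)) (X h1 u1)" using e1 e2 by simp
    then have "x1 = x2" using lx r1 r2 \<open>h1 = h2\<close> by (simp add: vadd_inv)
    then show False using d r1 r2 \<open>h1 = h2\<close> by simp
  qed
  moreover have "h2 \<noteq> h3"
  proof
    assume "h2 = h3"
    then have "vadd (vadd x2 (X h2 u2)) (X h2 u2) = vadd (vadd x3 (X h2 u2)) (X h2 u2)" using e3 e4 by simp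
    then have "x2 = x3" using lx r2 r3 \<open>h2 = h3\<close> by (simp add: vadd_inv)
    then show False using d r2 r3 \<open>h2 = h3\<close> by simp
  qed
  moreover have "h1 \<noteq> h3"
  proof
    assume "h1 = h3"
    then have "vadd (vadd x1 (X h1 u3)) (X h1 u3) = vadd (vadd x3 (X h1 u3)) (X h1 u3)" using e5 e6 by simp
    then have "x1 = x3" using lx r1 r3 \<open>h1 = h3\<close> by (simp add: vadd_inv)
    then show False using d r1 r3 \<open>h1 = h3\<close> by simp
  qed
  moreover have "u1 \<noteq> u2"
  proof
    assume "u1 = u2"
    then have "y1 = y2" using e2 e3 by simp
    then show False using d c1 c2 \<open>u1 = u2\<close> by simp
  qed
  moreover have "u2 \<noteq> u3"
  proof
    assume "u2 = u3"
    then have "y2 = y3" using e4 e5 by simp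
    then show False using d c2 c3 \<open>u2 = u3\<close> by simp
  qed
  moreover have "u1 \<noteq> u3"
  proof
    assume "u1 = u3"
    then have "y1 = y3" using e1 e6 by simp
    then show False using d c1 c3 \<open>u1 = u3\<close> by simp
  qed
  ultimately have dd: "h1 \<noteq> h2" "h2 \<noteq> h3" "h1 \<noteq> h3" "u1 \<noteq> u2" "u2 \<noteq> u3" "u1 \<noteq> u3" by auto
  note all = r1(1,2) r2(1,2) r3(1,2) c1(1,2) c2(1,2) c3(1,2) e1 e2 e3 e4 e5 e6 dd dd[symmetric]
  let ?R1 = "RV l h1 x1" and ?R2 = "RV l h2 x2" and ?R3 = "RV l h3 x3"
  let ?C1 = "CV l u1 y1" and ?C2 = "CV l u2 y2" and ?C3 = "CV l u3 y3"
  have G: "Eexp ?R1 ?C1 ?R2 ?C2 ?R3 ?C3 \<in> fmap l X ` Sset l nc nv X"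
  proof -
    consider "h1 < h2" "h2 < h3" | "h2 < h3" "h3 < h1" | "h3 < h1" "h1 < h2"
      | "h1 < h3" "h3 < h2" | "h2 < h1" "h1 < h3" | "h3 < h2" "h2 < h1"
      using dd by linarith
    then show ?thesis
    proof cases
      case 1 show ?thesis by (rule L_sorted; fact)
    next
      case 2
      have "Eexp ?R2 ?C2 ?R3 ?C3 ?R1 ?C1 \<in> fmap l X ` Sset l nc nv X"
        by (rule L_sorted; fact)
      moreover have "Eexp ?R2 ?C2 ?R3 ?C3 ?R1 ?C1 = Eexp ?R1 ?C1 ?R2 ?C2 ?R3 ?C3"
        by (simp add: Eexp_def insert_commute)
      ultimately show ?thesis by simp
    next
      case 3
      have "Eexp ?R3 ?C3 ?R1 ?C1 ?R2 ?C2 \<in> fmap l X ` Sset l nc nv X"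
        by (rule L_sorted; fact)
      moreover have "Eexp ?R3 ?C3 ?R1 ?C1 ?R2 ?C2 = Eexp ?R1 ?C1 ?R2 ?C2 ?R3 ?C3"
        by (simp add: Eexp_def insert_commute)
      ultimately show ?thesis by simp
    next
      case 4
      have "Eexp ?R1 ?C3 ?R3 ?C2 ?R2 ?C1 \<in> fmap l X ` Sset l nc nv X"
        by (rule L_sorted; fact)
      moreover have "Eexp ?R1 ?C3 ?R3 ?C2 ?R2 ?C1 = Eexp ?R1 ?C1 ?R2 ?C2 ?R3 ?C3"
        by (simp add: Eexp_def insert_commute)
      ultimately show ?thesis by simp
    next
      case 5
      have "Eexp ?R2 ?C1 ?R1 ?C3 ?R3 ?C2 \<in> fmap l X ` Sset l nc nv X"
        by (rule L_sorted; fact)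
      moreover have "Eexp ?R2 ?C1 ?R1 ?C3 ?R3 ?C2 = Eexp ?R1 ?C1 ?R2 ?C2 ?R3 ?C3"
        by (simp add: Eexp_def insert_commute)
      ultimately show ?thesis by simp
    next
      case 6
      have "Eexp ?R3 ?C2 ?R2 ?C1 ?R1 ?C3 \<in> fmap l X ` Sset l nc nv X"
        by (rule L_sorted; fact)
      moreover have "Eexp ?R3 ?C2 ?R2 ?C1 ?R1 ?C3 = Eexp ?R1 ?C1 ?R2 ?C2 ?R3 ?C3"
        by (simp add: Eexp_def insert_commute)
      ultimately show ?thesis by simp
    qed
  qed
  have "Inl r1 = ?R1" "Inl r2 = ?R2" "Inl r3 = ?R3" "Inr c1 = ?C1" "Inr c2 = ?C2" "Inr c3 = ?C3"
    using r1 r2 r3 c1 c2 c3 by (simp_all add: RV_def CV_def)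
  then show ?thesis using G by simp
qed

end



lemma sort3: "a' \<in> {a,b,c} \<Longrightarrow> b' \<in> {a,b,c} \<Longrightarrow> c' \<in> {a,b,c} \<Longrightarrow> (a::nat) < b \<Longrightarrow> b < c \<Longrightarrow>
   a' < b' \<Longrightarrow> b' < c' \<Longrightarrow> a' = a \<and> b' = b \<and> c' = c"
  by auto

lemma Eexp_cols:
  assumes E: "Eexp a b c d e g = Eexp a b' c d' e g'"
  and r: "a \<noteq> c" "a \<noteq> e" "c \<noteq> e" and cc: "b \<noteq> d" "b \<noteq> g" "d \<noteq> g"
  and x: "a \<notin> {b,d,g,b',d',g'}" "c \<notin> {b,d,g,b',d',g'}" "e \<notin> {b,d,g,b',d',g'}"
  shows "b = b' \<and> d = d' \<and> g = g'"
proof -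
  have m: "{p, q} \<in> Eexp a b c d e g" if "{p, q} \<in> Eexp a b' c d' e g'" for p q
    using that E by simp
  have 1: "{a,b'} \<in> Eexp a b c d e g" "{b',c} \<in> Eexp a b c d e g"
    "{c,d'} \<in> Eexp a b c d e g" "{d',e} \<in> Eexp a b c d e g"
    "{e,g'} \<in> Eexp a b c d e g" "{g',a} \<in> Eexp a b c d e g"
    by (rule m; simp add: Eexp_def)+
  from 1(1,2) r cc x have "b' = b" by (auto simp: Eexp_def doubleton_eq_iff)
  moreover from 1(3,4) r cc x have "d' = d" by (auto simp: Eexp_def doubleton_eq_iff)
  moreover from 1(5,6) r cc x have "g' = g" by (auto simp: Eexp_def doubleton_eq_iff)
  ultimately show ?thesis by simp
qed

lemma Eexp_inj:
  assumes len: "length x1 = l" "length x2 = l" "length x3 = l" "length y1 = l" "length y2 = l" "length y3 = l"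
    "length x1' = l" "length x2' = l" "length x3' = l" "length y1' = l" "length y2' = l" "length y3' = l"
  and o: "h < i" "i < j" "h' < i'" "i' < j'" "u \<noteq> m" "u \<noteq> w" "m \<noteq> w" "u' \<noteq> m'" "u' \<noteq> w'" "m' \<noteq> w'"
  and E: "Eexp (RV l h x1) (CV l u y1) (RV l i x2) (CV l m y2) (RV l j x3) (CV l w y3) =
          Eexp (RV l h' x1') (CV l u' y1') (RV l i' x2') (CV l m' y2') (RV l j' x3') (CV l w' y3')"
  shows "h = h' \<and> i = i' \<and> j = j' \<and> x1 = x1' \<and> u = u' \<and> m = m' \<and> w = w'"
proof -
  have V: "{RV l h x1, CV l u y1, RV l i x2, CV l m y2, RV l j x3, CV l w y3} =
           {RV l h' x1', CV l u' y1', RV l i' x2', CV l m' y2', RV l j' x3', CV l w' y3'}"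
    using arg_cong[where f=Union, OF E] unfolding Union_Eexp .
  have "RV l h' x1' \<in> {RV l h x1, CV l u y1, RV l i x2, CV l m y2, RV l j x3, CV l w y3}" by (subst V) simp
  then have a1: "RV l h' x1' \<in> {RV l h x1, RV l i x2, RV l j x3}" by simp
  have "RV l i' x2' \<in> {RV l h x1, CV l u y1, RV l i x2, CV l m y2, RV l j x3, CV l w y3}" by (subst V) simp
  then have a2: "RV l i' x2' \<in> {RV l h x1, RV l i x2, RV l j x3}" by simp
  have "RV l j' x3' \<in> {RV l h x1, CV l u y1, RV l i x2, CV l m y2, RV l j x3, CV l w y3}" by (subst V) simp
  then have a3: "RV l j' x3' \<in> {RV l h x1, RV l i x2, RV l j x3}" by simp
  have hin: "h' \<in> {h,i,j}" "i' \<in> {h,i,j}" "j' \<in> {h,i,j}"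
    using a1 a2 a3 len by (auto simp: RV_inj)
  have "h' = h \<and> i' = i \<and> j' = j" by (rule sort3[OF hin o(1,2,3,4)])
  then have hh: "h' = h" "i' = i" "j' = j" by auto
  have xx: "x1' = x1" "x2' = x2" "x3' = x3"
    using a1 a2 a3 len o unfolding hh by (auto simp: RV_inj)
  have dR: "RV l h x1 \<noteq> RV l i x2" "RV l h x1 \<noteq> RV l j x3" "RV l i x2 \<noteq> RV l j x3"
    using o len by (auto simp: RV_inj)
  have dC: "CV l u y1 \<noteq> CV l m y2" "CV l u y1 \<noteq> CV l w y3" "CV l m y2 \<noteq> CV l w y3"
    using o len by (auto simp: CV_inj)
  have "CV l u y1 = CV l u' y1' \<and> CV l m y2 = CV l m' y2' \<and> CV l w y3 = CV l w' y3'"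
    by (rule Eexp_cols[OF E[unfolded hh xx]]) (use dR dC in auto)
  then show ?thesis using hh xx len by (simp add: CV_inj)
qed

context
  fixes l nc nv :: nat and X :: "nat \<Rightarrow> nat \<Rightarrow> bool list"
  assumes Xlen: "\<And>h u. h < nc \<Longrightarrow> u < nv \<Longrightarrow> length (X h u) = l"
begin

lemma fmap_in:
  assumes "s \<in> Sset l nc nv X"
  shows "\<exists>vs. is_k_cycle (tanner_adj (QC_H l nc nv X)) 6 vs \<and> fmap l X s = set (map (walk_edge 6 vs) [0..<6])"
proof -
  obtain h i j m u u' x where s: "s = ((h, i, j), (m, ((u, u'), x)))" by (cases s) auto
  have S: "h < i" "i < j" "j < nc" "m < nv" "u < nv" "u' < nv" "u \<noteq> m" "u' \<noteq> m" "u \<noteq> u'"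
    "vadd (vadd (X h u) (X i u)) (X i m) = vadd (vadd (X h u') (X j u')) (X j m)" "length x = l"
    using assms unfolding s Sset_mem by auto
  have lx: "length (X h u) = l" "length (X i u) = l" "length (X i m) = l" "length (X h u') = l"
    "length (X j u') = l" "length (X j m) = l" using Xlen S by auto
  have cond: "vadd (X h u) (vadd (X i u) (X i m)) = vadd (X h u') (vadd (X j u') (X j m))"
    using S(10) by (simp add: vadd_assoc)
  define y1 where "y1 = vadd x (X h u)"
  define x2 where "x2 = vadd y1 (X i u)"
  define y3 where "y3 = vadd x (X h u')"
  define x3 where "x3 = vadd y3 (X j u')"
  define y2 where "y2 = vadd x3 (X j m)"
  have L: "length y1 = l" "length x2 = l" "length y3 = l" "length x3 = l" "length y2 = l"
    unfolding y1_def x2_def y3_def x3_def y2_def using lx S by auto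
  have f: "fmap l X s = Eexp (RV l h x) (CV l u y1) (RV l i x2) (CV l m y2) (RV l j x3) (CV l u' y3)"
    unfolding s fmap_def Let_def y1_def x2_def y3_def x3_def y2_def by simp
  let ?vs = "[RV l h x, CV l u y1, RV l i x2, CV l m y2, RV l j x3, CV l u' y3]"
  have hb: "h < nc" "i < nc" using S by auto
  have a1: "tanner_adj (QC_H l nc nv X) (RV l h x) (CV l u y1)"
    using adj_RC[of h nc u nv x l y1 X] hb S L by (simp add: y1_def)
  have a2: "tanner_adj (QC_H l nc nv X) (CV l u y1) (RV l i x2)"
    using adj_CR[of i nc u nv x2 l y1 X] hb S L lx by (simp add: x2_def vadd_inv)
  have a3: "tanner_adj (QC_H l nc nv X) (RV l i x2) (CV l m y2)"
  proof -
    have "y2 = vadd x2 (X i m)"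
      unfolding y2_def x3_def y3_def x2_def y1_def by (simp add: vadd_assoc cond)
    then show ?thesis using adj_RC[of i nc m nv x2 l y2 X] hb S L by simp
  qed
  have a4: "tanner_adj (QC_H l nc nv X) (CV l m y2) (RV l j x3)"
    using adj_CR[of j nc m nv x3 l y2 X] S L by (simp add: y2_def)
  have a5: "tanner_adj (QC_H l nc nv X) (RV l j x3) (CV l u' y3)"
    using adj_RC[of j nc u' nv x3 l y3 X] S L lx by (simp add: x3_def vadd_inv)
  have a6: "tanner_adj (QC_H l nc nv X) (CV l u' y3) (RV l h x)"
    using adj_CR[of h nc u' nv x l y3 X] hb S L by (simp add: y3_def)
  have d: "distinct ?vs" using S L by (auto simp: RV_inj CV_inj)
  have "is_k_cycle (tanner_adj (QC_H l nc nv X)) 6 ?vs"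
    unfolding cyc6 using a1 a2 a3 a4 a5 a6 d dist_edges[OF d] by blast
  moreover have "fmap l X s = set (map (walk_edge 6 ?vs) [0..<6])" unfolding edges6 f ..
  ultimately show ?thesis by blast
qed

lemma fmap_inj: "inj_on (fmap l X) (Sset l nc nv X)"
proof (rule inj_onI)
  fix s s' assume sS: "s \<in> Sset l nc nv X" and sS': "s' \<in> Sset l nc nv X" and eq: "fmap l X s = fmap l X s'"
  obtain h i j m u u' x where s: "s = ((h, i, j), (m, ((u, u'), x)))" by (cases s) auto
  obtain h2 i2 j2 m2 v v' x' where s': "s' = ((h2, i2, j2), (m2, ((v, v'), x')))" by (cases s') auto
  have S: "h < i" "i < j" "j < nc" "m < nv" "u < nv" "u' < nv" "u \<noteq> m" "u' \<noteq> m" "u \<noteq> u'" "length x = l"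
    using sS unfolding s Sset_mem by auto
  have S': "h2 < i2" "i2 < j2" "j2 < nc" "m2 < nv" "v < nv" "v' < nv" "v \<noteq> m2" "v' \<noteq> m2" "v \<noteq> v'" "length x' = l"
    using sS' unfolding s' Sset_mem by auto
  have lx: "length (X h u) = l" "length (X i u) = l" "length (X i m) = l" "length (X h u') = l"
    "length (X j u') = l" "length (X j m) = l" using Xlen S by auto
  have lx': "length (X h2 v) = l" "length (X i2 v) = l" "length (X i2 m2) = l" "length (X h2 v') = l"
    "length (X j2 v') = l" "length (X j2 m2) = l" using Xlen S' by auto
  have "h = h2 \<and> i = i2 \<and> j = j2 \<and> x = x' \<and> u = v \<and> m = m2 \<and> u' = v'"
    by (rule Eexp_inj[OF _ _ _ _ _ _ _ _ _ _ _ _ _ _ _ _ _ _ _ _ _ _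
          eq[unfolded s s' fmap_def Let_def prod.case]])
       (use S S' lx lx' in auto)
  then show "s = s'" unfolding s s' by simp
qed

end



context
  fixes l nc nv :: nat and X :: "nat \<Rightarrow> nat \<Rightarrow> bool list"
  assumes Xlen: "\<And>h u. h < nc \<Longrightarrow> u < nv \<Longrightarrow> length (X h u) = l"
begin

lemma cyc_sub:
  assumes cyc: "is_k_cycle (tanner_adj (QC_H l nc nv X)) 6 vs"
  shows "set (map (walk_edge 6 vs) [0..<6]) \<in> fmap l X ` Sset l nc nv X"
proof -
  have "length vs = 6" using cyc by (simp add: is_k_cycle_def)
  then obtain a0 a1 a2 a3 a4 a5 where vs: "vs = [a0, a1, a2, a3, a4, a5]" using len6 by blast
  let ?A = "tanner_adj (QC_H l nc nv X)"
  have c: "distinct [a0, a1, a2, a3, a4, a5]" "?A a0 a1" "?A a1 a2" "?A a2 a3" "?A a3 a4" "?A a4 a5" "?A a5 a0"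
    using cyc unfolding vs cyc6 by auto
  have E: "set (map (walk_edge 6 vs) [0..<6]) = Eexp a0 a1 a2 a3 a4 a5" unfolding vs edges6 ..
  show ?thesis
  proof (cases a0)
    case (Inl r1)
    obtain c1 where c1: "a1 = Inr c1" "ent l nc nv X r1 c1" using c(2) Inl by (auto simp: adj_Inl)
    obtain r2 where r2: "a2 = Inl r2" "ent l nc nv X r2 c1" using c(3) c1 by (auto simp: adj_Inr)
    obtain c2 where c2: "a3 = Inr c2" "ent l nc nv X r2 c2" using c(4) r2 by (auto simp: adj_Inl)
    obtain r3 where r3: "a4 = Inl r3" "ent l nc nv X r3 c2" using c(5) c2 by (auto simp: adj_Inr)
    obtain c3 where c3: "a5 = Inr c3" "ent l nc nv X r3 c3" using c(6) r3 by (auto simp: adj_Inl)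
    have e6: "ent l nc nv X r1 c3" using c(7) c3 Inl by (auto simp: adj_Inr)
    have d: "r1 \<noteq> r2" "r1 \<noteq> r3" "r2 \<noteq> r3" "c1 \<noteq> c2" "c1 \<noteq> c3" "c2 \<noteq> c3"
      using c(1) Inl c1 r2 c2 r3 c3 by auto
    show ?thesis unfolding E using L_all[OF Xlen c1(2) r2(2) c2(2) r3(2) c3(2) e6 d] Inl c1 r2 c2 r3 c3
      by simp
  next
    case (Inr c1)
    obtain r2 where r2: "a1 = Inl r2" "ent l nc nv X r2 c1" using c(2) Inr by (auto simp: adj_Inr)
    obtain c2 where c2: "a2 = Inr c2" "ent l nc nv X r2 c2" using c(3) r2 by (auto simp: adj_Inl)
    obtain r3 where r3: "a3 = Inl r3" "ent l nc nv X r3 c2" using c(4) c2 by (auto simp: adj_Inr)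
    obtain c3 where c3: "a4 = Inr c3" "ent l nc nv X r3 c3" using c(5) r3 by (auto simp: adj_Inl)
    obtain r1 where r1: "a5 = Inl r1" "ent l nc nv X r1 c3" using c(6) c3 by (auto simp: adj_Inr)
    have e1: "ent l nc nv X r1 c1" using c(7) r1 Inr by (auto simp: adj_Inl)
    have d: "r1 \<noteq> r2" "r1 \<noteq> r3" "r2 \<noteq> r3" "c1 \<noteq> c2" "c1 \<noteq> c3" "c2 \<noteq> c3"
      using c(1) Inr r1 r2 c2 r3 c3 by auto
    have "Eexp a0 a1 a2 a3 a4 a5 = Eexp (Inl r1) (Inr c1) (Inl r2) (Inr c2) (Inl r3) (Inr c3)"
      using Inr r1 r2 c2 r3 c3 Eexp_rot by metis
    then show ?thesis unfolding E using L_all[OF Xlen e1 r2(2) c2(2) r3(2) c3(2) r1(2) d]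
      by simp
  qed
qed

lemma cyc_eq:
  "{E. \<exists>vs. is_k_cycle (tanner_adj (QC_H l nc nv X)) 6 vs \<and> E = set (map (walk_edge 6 vs) [0..<6])}
     = fmap l X ` Sset l nc nv X"
proof
  show "{E. \<exists>vs. is_k_cycle (tanner_adj (QC_H l nc nv X)) 6 vs \<and> E = set (map (walk_edge 6 vs) [0..<6])}
     \<subseteq> fmap l X ` Sset l nc nv X" using cyc_sub by blast
  show "fmap l X ` Sset l nc nv X \<subseteq>
    {E. \<exists>vs. is_k_cycle (tanner_adj (QC_H l nc nv X)) 6 vs \<and> E = set (map (walk_edge 6 vs) [0..<6])}"
  proof
    fix E assume "E \<in> fmap l X ` Sset l nc nv X"
    then obtain s where s: "s \<in> Sset l nc nv X" "E = fmap l X s" by blast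
    from fmap_in[where l=l and nc=nc and nv=nv and X=X, OF Xlen s(1)] show "E \<in> {E. \<exists>vs. is_k_cycle (tanner_adj (QC_H l nc nv X)) 6 vs \<and> E = set (map (walk_edge 6 vs) [0..<6])}"
      using s(2) by auto
  qed
qed

end

lemma card_Sset:
  "card (Sset l nc nv X) = 2 ^ l * (\<Sum>(h, i, j) \<in> {(h, i, j). h < i \<and> i < j \<and> j < nc}. \<Sum>m<nv. rho nv X h i j m)"
proof -
  let ?P = "{(h, i, j). h < i \<and> i < j \<and> (j::nat) < nc}"
  have finP: "finite ?P"
    by (rule finite_subset[of _ "{..<nc} \<times> {..<nc} \<times> {..<nc}"]) auto
  have finR: "finite (rhoset nv X h i j m)" for h i j m
    by (rule finite_subset[of _ "{..<nv} \<times> {..<nv}"]) (auto simp: rhoset_def)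
  have inner: "card (Sigma {..<nv} (\<lambda>m. rhoset nv X h i j m \<times> F2vec l)) = (\<Sum>m<nv. rho nv X h i j m * 2 ^ l)"
    for h i j
    by (simp add: card_SigmaI finR F2vec_finite card_cartesian_product F2vec_card rho_eq)
  have "card (Sset l nc nv X) = (\<Sum>p\<in>?P. card ((\<lambda>(h, i, j). Sigma {..<nv} (\<lambda>m. rhoset nv X h i j m \<times> F2vec l)) p))"
    unfolding Sset_def
    by (rule card_SigmaI[OF finP]) (auto simp: finR F2vec_finite split: prod.splits)
  also have "\<dots> = (\<Sum>p\<in>?P. 2 ^ l * (\<lambda>(h, i, j). \<Sum>m<nv. rho nv X h i j m) p)"
    by (rule sum.cong) (auto simp: inner sum_distrib_left mult.commute split: prod.splits)
  also have "\<dots> = 2 ^ l * (\<Sum>(h, i, j) \<in> ?P. \<Sum>m<nv. rho nv X h i j m)"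
    by (simp add: sum_distrib_left)
  finally show ?thesis .
qed


theorem mainTheorem14:
  fixes l nc nv :: nat and X :: "nat \<Rightarrow> nat \<Rightarrow> bool list"
  assumes "l \<ge> 1" and "nc \<ge> 1" and "nv \<ge> 1"
    and "\<And>h u. h < nc \<Longrightarrow> u < nv \<Longrightarrow> X h u \<in> F2vec l"
  shows "num_k_cycles (tanner_adj (QC_H l nc nv X)) 6 =
           2 ^ l * (\<Sum>(h, i, j) \<in> {(h, i, j). h < i \<and> i < j \<and> j < nc}.
                      \<Sum>m<nv. rho nv X h i j m)
         \<and> (num_k_cycles (tanner_adj (QC_H l nc nv X)) 6 = 0 \<longleftrightarrow>
              (\<forall>h i j m. h < i \<and> i < j \<and> j < nc \<and> m < nv \<longrightarrow> rho nv X h i j m = 0))"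
proof -
  have Xlen: "\<And>h u. h < nc \<Longrightarrow> u < nv \<Longrightarrow> length (X h u) = l" using assms(4) by simp
  let ?P = "{(h, i, j). h < i \<and> i < j \<and> (j::nat) < nc}"
  let ?S = "\<Sum>(h, i, j) \<in> ?P. \<Sum>m<nv. rho nv X h i j m"
  have "num_k_cycles (tanner_adj (QC_H l nc nv X)) 6 = card (fmap l X ` Sset l nc nv X)"
  proof -
    have ceq: "{E. \<exists>vs. is_k_cycle (tanner_adj (QC_H l nc nv X)) 6 vs \<and> E = set (map (walk_edge 6 vs) [0..<6])}
       = fmap l X ` Sset l nc nv X"
      by (rule cyc_eq) (rule Xlen)
    show ?thesis unfolding num_k_cycles_def ceq ..
  qed
  also have "\<dots> = card (Sset l nc nv X)"
    by (rule card_image[OF fmap_inj[where l=l and nc=nc and nv=nv and X=X, OF Xlen]])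
  also have "\<dots> = 2 ^ l * ?S" by (rule card_Sset)
  finally have N: "num_k_cycles (tanner_adj (QC_H l nc nv X)) 6 = 2 ^ l * ?S" .
  have finP: "finite ?P"
    by (rule finite_subset[of _ "{..<nc} \<times> {..<nc} \<times> {..<nc}"]) auto
  have "?S = 0 \<longleftrightarrow> (\<forall>h i j m. h < i \<and> i < j \<and> j < nc \<and> m < nv \<longrightarrow> rho nv X h i j m = 0)"
    using finP by (auto simp: sum_eq_0_iff)
  then show ?thesis using N by simp
qed

end
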